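(* Let $\Gamma_2(t)=\mathbb{A}(t)+\varepsilon^*\mathbb{A}^*(t)$ be a differentiable curve in the unit hyper-dual sphere $\mathbb{S}^2_{\mathbb{D}_2}$, with $\mathbb{A}=\mathbf a_0+\varepsilon\mathbf a_1$ and $\mathbb{A}^*=\mathbf a_2+\varepsilon\mathbf a_3$ ($\mathbf a_i(t)\in\mathbb{R}^3$). Let $\Phi_2(t,\mathbb{U})=\mathbb{A}(t)\times\mathbb{A}^*(t)+\mathbb{U}\,\mathbb{A}(t)$, $\mathbb{U}\in D$, be its corresponding ruled surface in $\mathbb{D}$. Then $\Phi_2$ is developable if and only if, for all $t$, $$\mathbf a_0'\cdot\mathbf a_2'=0\quad\text{and}\quad \mathbf a_0'\cdot\mathbf a_3'=-\mathbf a_1'\cdot\mathbf a_2'.$$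
   Context: Dual numbers $D=\{a+\varepsilon a^*\}$, $\varepsilon^2=0$, $\varepsilon\ne0$. Dual vectors $\mathbb{D}=\{\mathbf a+\varepsilon\mathbf a^*:\mathbf a,\mathbf a^*\in\mathbb{R}^3\}$ with $D$-valued inner product $\langle\mathbf a+\varepsilon\mathbf a^*,\mathbf b+\varepsilon\mathbf b^*\rangle=\mathbf a\cdot\mathbf b+\varepsilon(\mathbf a^*\cdot\mathbf b+\mathbf a\cdot\mathbf b^* )$, cross product $(\mathbf a+\varepsilon\mathbf a^* )\times(\mathbf b+\varepsilon\mathbf b^* )=\mathbf a\times\mathbf b+\varepsilon(\mathbf a\times\mathbf b^*+\mathbf a^*\times\mathbf b)$, scalar multiplication by dual numbers $(u+\varepsilon u^* )(\mathbf a+\varepsilon\mathbf a^* )=u\mathbf a+\varepsilon(u\mathbf a^*+u^*\mathbf a)$, and dual determinant $\det(X,Y,Z)=\langle X,Y\times Z\rangle$. Hyper-dual vectors $\mathbb{D}_2=\{\mathbb{A}+\varepsilon^*\mathbb{A}^*:\mathbb{A},\mathbb{A}^*\in\mathbb{D}\}$ with $\varepsilon^{*2}=0$, $\varepsilon\varepsilon^*=\varepsilon^*\varepsilon\ne0$. Unit hyper-dual sphere: $\mathbb{S}^2_{\mathbb{D}_2}=\{\mathbb{A}+\varepsilon^*\mathbb{A}^*:\langle\mathbb{A},\mathbb{A}\rangle=1,\ \langle\mathbb{A},\mathbb{A}^*\rangle=0\}$. A ruled surface in $\mathbb{D}$ is $\Phi(t,\mathbb{U})=\mathbb{B}(t)+\mathbb{U}\,\mathbb{B}^*(t)$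 with $\mathbb{B},\mathbb{B}^*$ curves in $\mathbb{D}$ and $\mathbb{U}\in D$; it is called developable if $\det(\mathbb{B}'(t),\mathbb{B}^*(t),\mathbb{B}^{*\prime}(t))=0$ (as a dual number) for all $t$. Derivatives are componentwise. *)

theory Defs
  imports "HOL-Analysis.Analysis" "HOL-Analysis.Cross3"
begin

text \<open>Dual numbers a + eps a* are pairs (a, a*) of reals; dual vectors
  A + eps A* are pairs (A, A*) of vectors in real^3.
  Hyper-dual vectors AA + eps* AA* are pairs of dual vectors.\<close>

type_synonym dnum = "real \<times> real"
type_synonym dvec = "(real^3) \<times> (real^3)"
type_synonym hdvec = "dvec \<times> dvec"

definition dinner :: "dvec \<Rightarrow> dvec \<Rightarrow> dnum" where
  "dinner X Y = (fst X \<bullet> fst Y, snd X \<bullet> fst Y + fst X \<bullet> snd Y)"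

definition dcross :: "dvec \<Rightarrow> dvec \<Rightarrow> dvec" where
  "dcross X Y = (cross3 (fst X) (fst Y),
                 cross3 (fst X) (snd Y) + cross3 (snd X) (fst Y))"

definition dscale :: "dnum \<Rightarrow> dvec \<Rightarrow> dvec" where
  "dscale u X = (fst u *\<^sub>R fst X, fst u *\<^sub>R snd X + snd u *\<^sub>R fst X)"

definition dadd :: "dvec \<Rightarrow> dvec \<Rightarrow> dvec" where
  "dadd X Y = (fst X + fst Y, snd X + snd Y)"

definition ddet :: "dvec \<Rightarrow> dvec \<Rightarrow> dvec \<Rightarrow> dnum" where
  "ddet X Y Z = dinner X (dcross Y Z)"

definition dderiv :: "(real \<Rightarrow> dvec) \<Rightarrow> real \<Rightarrow> dvec" where
  "dderiv c t = (vector_derivative (\<lambda>s. fst (c s)) (at t),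
                 vector_derivative (\<lambda>s. snd (c s)) (at t))"

definition hd_unit_sphere :: "hdvec set" where
  "hd_unit_sphere = {(A, As). dinner A A = (1, 0) \<and> dinner A As = (0, 0)}"

definition ruled_surface :: "(real \<Rightarrow> dvec) \<Rightarrow> (real \<Rightarrow> dvec) \<Rightarrow> real \<Rightarrow> dnum \<Rightarrow> dvec" where
  "ruled_surface B Bs t U = dadd (B t) (dscale U (Bs t))"

definition developable :: "(real \<Rightarrow> dvec) \<Rightarrow> (real \<Rightarrow> dvec) \<Rightarrow> bool" where
  "developable B Bs \<longleftrightarrow> (\<forall>t. ddet (dderiv B t) (Bs t) (dderiv Bs t) = (0, 0))"

end

theory Submission
  imports Defs
begin

lemma bb_cross: "bounded_bilinear (cross3 :: real^3 \<Rightarrow> real^3 \<Rightarrow> real^3)"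
  using bilinear_cross bilinear_conv_bounded_bilinear by blast

lemma lagrange: "(cross3 (a::real^3) b) \<bullet> (cross3 c d) = (a \<bullet> c) * (b \<bullet> d) - (a \<bullet> d) * (b \<bullet> c)"
  by (simp add: cross3_simps)

lemma const_deriv_zero:
  assumes "\<And>s. f s = (k::real)" "(f has_vector_derivative d) (at t)"
  shows "d = 0"
proof -
  have "f = (\<lambda>s. k)" using assms(1) by auto
  then have "(f has_vector_derivative 0) (at t)" by simp
  then show ?thesis using assms(2) vector_derivative_unique_at by blast
qed

theorem proposition1:
  fixes a0 a1 a2 a3 :: "real \<Rightarrow> real^3"
  assumes diff: "\<And>t. a0 differentiable at t" "\<And>t. a1 differentiable at t"
                "\<And>t. a2 differentiable at t" "\<And>t. a3 differentiable at t"
    and sph: "\<And>t. ((a0 t, a1 t), (a2 t, a3 t)) \<in> hd_unit_sphere"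
  shows "developable (\<lambda>t. dcross (a0 t, a1 t) (a2 t, a3 t)) (\<lambda>t. (a0 t, a1 t))
     \<longleftrightarrow> (\<forall>t. vector_derivative a0 (at t) \<bullet> vector_derivative a2 (at t) = 0
            \<and> vector_derivative a0 (at t) \<bullet> vector_derivative a3 (at t)
              = - (vector_derivative a1 (at t) \<bullet> vector_derivative a2 (at t)))"
proof -
  have c1: "\<And>t. a0 t \<bullet> a0 t = 1" and c2: "\<And>t. a1 t \<bullet> a0 t + a0 t \<bullet> a1 t = 0"
    and c3: "\<And>t. a0 t \<bullet> a2 t = 0" and c4: "\<And>t. a1 t \<bullet> a2 t + a0 t \<bullet> a3 t = 0"
    using sph by (auto simp: hd_unit_sphere_def dinner_def)
  have key: "ddet (dderiv (\<lambda>t. dcross (a0 t, a1 t) (a2 t, a3 t)) t) (a0 t, a1 t) (dderiv (\<lambda>t. (a0 t, a1 t)) t)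
     = (vector_derivative a0 (at t) \<bullet> vector_derivative a2 (at t),
        vector_derivative a1 (at t) \<bullet> vector_derivative a2 (at t) + vector_derivative a0 (at t) \<bullet> vector_derivative a3 (at t))" for t
  proof -
    define d0 where "d0 = vector_derivative a0 (at t)"
    define d1 where "d1 = vector_derivative a1 (at t)"
    define d2 where "d2 = vector_derivative a2 (at t)"
    define d3 where "d3 = vector_derivative a3 (at t)"
    have D0: "(a0 has_vector_derivative d0) (at t)" unfolding d0_def
      using diff(1) vector_derivative_works by blast
    have D1: "(a1 has_vector_derivative d1) (at t)" unfolding d1_def
      using diff(2) vector_derivative_works by blast
    have D2: "(a2 has_vector_derivative d2) (at t)" unfolding d2_def
      using diff(3) vector_derivative_works by blast
    have D3: "(a3 has_vector_derivative d3) (at t)" unfolding d3_def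
      using diff(4) vector_derivative_works by blast
    note BI = bounded_bilinear.has_vector_derivative[OF bounded_bilinear_inner]
    note BC = bounded_bilinear.has_vector_derivative[OF bb_cross]
    have e1: "a0 t \<bullet> d0 + d0 \<bullet> a0 t = 0"
      by (rule const_deriv_zero[OF c1 BI[OF D0 D0]])
    have e2: "(a1 t \<bullet> d0 + d1 \<bullet> a0 t) + (a0 t \<bullet> d1 + d0 \<bullet> a1 t) = 0"
      using const_deriv_zero[of "\<lambda>s. a1 s \<bullet> a0 s + a0 s \<bullet> a1 s" 0,
          OF c2 has_vector_derivative_add[OF BI[OF D1 D0] BI[OF D0 D1]]] .
    have e3: "a0 t \<bullet> d2 + d0 \<bullet> a2 t = 0"
      by (rule const_deriv_zero[OF c3 BI[OF D0 D2]])
    have dB1: "vector_derivative (\<lambda>s. cross3 (a0 s) (a2 s)) (at t) = cross3 (a0 t) (d2) + cross3 (d0) (a2 t)"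
      using BC[OF D0 D2] vector_derivative_at by blast
    have dB2: "vector_derivative (\<lambda>s. cross3 (a0 s) (a3 s) + cross3 (a1 s) (a2 s)) (at t)
        = (cross3 (a0 t) (d3) + cross3 (d0) (a3 t)) + (cross3 (a1 t) (d2) + cross3 (d1) (a2 t))"
      using has_vector_derivative_add[OF BC[OF D0 D3] BC[OF D1 D2]] vector_derivative_at by blast
    have dA: "dderiv (\<lambda>t. (a0 t, a1 t)) t = (d0, d1)"
      by (simp add: dderiv_def d0_def d1_def)
    have dB: "dderiv (\<lambda>t. dcross (a0 t, a1 t) (a2 t, a3 t)) t
        = (cross3 (a0 t) (d2) + cross3 (d0) (a2 t), (cross3 (a0 t) (d3) + cross3 (d0) (a3 t)) + (cross3 (a1 t) (d2) + cross3 (d1) (a2 t)))"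
      by (simp add: dderiv_def dcross_def dB1 dB2)
    have s1: "d0 \<bullet> a0 t = 0" using e1 by (simp add: inner_commute)
    have s2: "d1 \<bullet> a0 t + d0 \<bullet> a1 t = 0" using e2 by (simp add: inner_commute)
    have s3: "d2 \<bullet> a0 t = - (d0 \<bullet> a2 t)" using e3 by (simp add: inner_commute)
    have s2': "d0 \<bullet> a1 t = - (d1 \<bullet> a0 t)" using s2 by simp
    have s4: "a0 t \<bullet> a3 t = - (a1 t \<bullet> a2 t)" using c4[of t] by simp
    show ?thesis
      unfolding ddet_def dA dB
      unfolding dinner_def dcross_def
      apply (simp add: inner_add_left inner_add_right lagrange d0_def[symmetric] d1_def[symmetric]
          d2_def[symmetric] d3_def[symmetric])
      using s1 s2 c1[of t] c2[of t] c3[of t] c4[of t]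
      apply (simp add: inner_commute algebra_simps)
      apply (simp add: s2' s3 s4)
      done
  qed
  show ?thesis unfolding developable_def key by (auto simp: add_eq_0_iff)
qed

end
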